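(* Let $G$ be a connected complex Lie group, $H$ a complex Lie group, $\Gamma \subset G$ a discrete subgroup and $\rho : \Gamma \to H$ a group homomorphism. Assume that every holomorphic function on $G/\Gamma$ is constant. Then the holomorphic $H$-principal bundle $E \to G/\Gamma$ induced by $\rho$ is holomorphically trivial if and only if $\rho$ extends to a holomorphic group homomorphism $\tilde\rho : G \to H$.
   Context: For a homomorphism $\rho:\Gamma\to H$, the induced (flat) $H$-principal bundle over $G/\Gamma$ is $E=(G\times H)/\Gamma$, where $\Gamma$ acts on $G$ by right multiplication (deck transformations) and on $H$ via $\rho$; $H$ acts on $E$ by right multiplication on the second factor. Such a bundle is holomorphically trivial as an $H$-principal bundle (not necessarily compatibly with the flat connection) if and only if there is a holomorphic map $\phi:G\to H$ with $\phi(g\gamma)=\phi(g)\rho(\gamma)$ for all $g\in G$, $\gamma\in\Gamma$. *)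

theory Defs
  imports "HOL-Analysis.Analysis"
begin

definition cscale :: "complex \<Rightarrow> complex^'n \<Rightarrow> complex^'n" where
  "cscale c v = (\<chi> i. c * v $ i)"

definition holo_on :: "(complex^'n \<Rightarrow> complex^'m) \<Rightarrow> (complex^'n) set \<Rightarrow> bool" where
  "holo_on f S \<longleftrightarrow> open S \<and>
     (\<forall>x\<in>S. \<exists>D. (f has_derivative D) (at x) \<and> (\<forall>c v. D (cscale c v) = cscale c (D v)))"

definition holo2_on :: "((complex^'n) \<times> (complex^'n) \<Rightarrow> complex^'m) \<Rightarrow> ((complex^'n) \<times> (complex^'n)) set \<Rightarrow> bool" where
  "holo2_on f S \<longleftrightarrow> open S \<and>
     (\<forall>x\<in>S. \<exists>D. (f has_derivative D) (at x) \<and>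
        (\<forall>c v w. D (cscale c v, cscale c w) = cscale c (D (v, w))))"

definition is_chart :: "('a::topological_space \<Rightarrow> complex^'n) \<Rightarrow> 'a set \<Rightarrow> bool" where
  "is_chart \<phi> U \<longleftrightarrow> open U \<and> open (\<phi> ` U) \<and> inj_on \<phi> U \<and> continuous_on U \<phi> \<and>
     continuous_on (\<phi> ` U) (inv_into U \<phi>)"

definition complex_atlas :: "(('a::topological_space \<Rightarrow> complex^'n) \<times> 'a set) set \<Rightarrow> bool" where
  "complex_atlas A \<longleftrightarrow>
     (\<forall>(\<phi>, U)\<in>A. is_chart \<phi> U) \<and> (\<Union>(\<phi>, U)\<in>A. U) = UNIV \<and>
     (\<forall>(\<phi>, U)\<in>A. \<forall>(\<psi>, V)\<in>A. holo_on (\<psi> \<circ> inv_into U \<phi>) (\<phi> ` (U \<inter> V)))"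

definition holo_map ::
  "(('a::topological_space \<Rightarrow> complex^'n) \<times> 'a set) set \<Rightarrow>
   (('b::topological_space \<Rightarrow> complex^'m) \<times> 'b set) set \<Rightarrow> ('a \<Rightarrow> 'b) \<Rightarrow> bool" where
  "holo_map A B f \<longleftrightarrow> continuous_on UNIV f \<and>
     (\<forall>(\<phi>, U)\<in>A. \<forall>(\<psi>, V)\<in>B. holo_on (\<psi> \<circ> f \<circ> inv_into U \<phi>) (\<phi> ` (U \<inter> f -` V)))"

definition holo_fun :: "(('a::topological_space \<Rightarrow> complex^'n) \<times> 'a set) set \<Rightarrow> ('a \<Rightarrow> complex) \<Rightarrow> bool" where
  "holo_fun A f \<longleftrightarrow> continuous_on UNIV f \<and>
     (\<forall>(\<phi>, U)\<in>A. holo_on (\<lambda>z. (\<chi> i::1. f (inv_into U \<phi> z))) (\<phi> ` U))"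

text \<open>Complex Lie group: a Hausdorff topological group (written additively, not
  necessarily commutative) with a holomorphic atlas for which multiplication and
  inversion are holomorphic.\<close>
definition complex_lie_group :: "(('a::{t2_space, group_add} \<Rightarrow> complex^'n) \<times> 'a set) set \<Rightarrow> bool" where
  "complex_lie_group A \<longleftrightarrow> complex_atlas A \<and>
     continuous_on UNIV (\<lambda>p::'a \<times> 'a. fst p + snd p) \<and>
     (\<forall>(\<phi>, U)\<in>A. \<forall>(\<phi>', U')\<in>A. \<forall>(\<psi>, V)\<in>A.
        holo2_on (\<lambda>(z, w). \<psi> (inv_into U \<phi> z + inv_into U' \<phi>' w))
          {(z, w). z \<in> \<phi> ` U \<and> w \<in> \<phi>' ` U' \<and> inv_into U \<phi> z + inv_into U' \<phi>' w \<in> V}) \<and>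
     holo_map A A (uminus :: 'a \<Rightarrow> 'a)"

definition discrete_subgroup :: "'a::{topological_space, group_add} set \<Rightarrow> bool" where
  "discrete_subgroup \<Gamma> \<longleftrightarrow> 0 \<in> \<Gamma> \<and> (\<forall>a\<in>\<Gamma>. \<forall>b\<in>\<Gamma>. a + b \<in> \<Gamma>) \<and> (\<forall>a\<in>\<Gamma>. - a \<in> \<Gamma>) \<and>
     (\<forall>\<gamma>\<in>\<Gamma>. \<exists>U. open U \<and> U \<inter> \<Gamma> = {\<gamma>})"

definition group_hom_on :: "'a::group_add set \<Rightarrow> ('a \<Rightarrow> 'b::group_add) \<Rightarrow> bool" where
  "group_hom_on \<Gamma> \<rho> \<longleftrightarrow> (\<forall>a\<in>\<Gamma>. \<forall>b\<in>\<Gamma>. \<rho> (a + b) = \<rho> a + \<rho> b)"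

text \<open>Holomorphic triviality of the induced bundle (G x H)/Gamma, via the criterion
  given in the context: a holomorphic phi : G -> H with phi(g gamma) = phi(g) rho(gamma).\<close>
definition induced_bundle_holo_trivial ::
  "(('g::{t2_space, group_add} \<Rightarrow> complex^'n) \<times> 'g set) set \<Rightarrow>
   (('h::{t2_space, group_add} \<Rightarrow> complex^'m) \<times> 'h set) set \<Rightarrow> 'g set \<Rightarrow> ('g \<Rightarrow> 'h) \<Rightarrow> bool" where
  "induced_bundle_holo_trivial A B \<Gamma> \<rho> \<longleftrightarrow>
     (\<exists>\<phi>. holo_map A B \<phi> \<and> (\<forall>g. \<forall>\<gamma>\<in>\<Gamma>. \<phi> (g + \<gamma>) = \<phi> g + \<rho> \<gamma>))"

text \<open>Holomorphic functions on G/Gamma = Gamma-invariant holomorphic functions on G.\<close>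
definition holo_fun_quotient :: "(('a::{t2_space, group_add} \<Rightarrow> complex^'n) \<times> 'a set) set \<Rightarrow> 'a set \<Rightarrow> ('a \<Rightarrow> complex) \<Rightarrow> bool" where
  "holo_fun_quotient A \<Gamma> f \<longleftrightarrow> holo_fun A f \<and> (\<forall>g. \<forall>\<gamma>\<in>\<Gamma>. f (g + \<gamma>) = f g)"

end

theory Submission
  imports Defs "HOL-Complex_Analysis.Complex_Analysis"
begin

lemma cscale_nth[simp]: "cscale c v $ i = c * v $ i"
  by (simp add: cscale_def)
lemma cscale_0[simp]: "cscale c 0 = 0" by (simp add: vec_eq_iff)
lemma cscale_1[simp]: "cscale 1 v = v" by (simp add: vec_eq_iff)
lemma cscale_add: "cscale c (v + w) = cscale c v + cscale c w"
  by (simp add: vec_eq_iff algebra_simps)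
lemma cscale_mult: "cscale (a * b) v = cscale a (cscale b v)"
  by (simp add: vec_eq_iff)
lemma linear_cscale_left: "linear (\<lambda>c. cscale c v)"
proof (rule linearI)
  fix r :: real and c :: complex
  show "cscale (scaleR r c) v = scaleR r (cscale c v)"
    by (simp add: vec_eq_iff vector_scaleR_component)
qed (simp add: vec_eq_iff algebra_simps)
lemma bounded_linear_cscale_left: "bounded_linear (\<lambda>c. cscale c v)"
  using linear_cscale_left linear_conv_bounded_linear by blast

definition pscale :: "complex \<Rightarrow> (complex^'n) \<times> (complex^'n) \<Rightarrow> (complex^'n) \<times> (complex^'n)" where
  "pscale c p = (cscale c (fst p), cscale c (snd p))"

definition cd :: "(complex \<Rightarrow> 'a \<Rightarrow> 'a) \<Rightarrow> (complex \<Rightarrow> 'b \<Rightarrow> 'b) \<Rightarrow> ('a::real_normed_vector \<Rightarrow> 'b::real_normed_vector) \<Rightarrow> 'a \<Rightarrow> bool" where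
  "cd sA sB f x \<longleftrightarrow> (\<exists>D. (f has_derivative D) (at x) \<and> (\<forall>c v. D (sA c v) = sB c (D v)))"

lemma holo_on_cd: "holo_on f S \<longleftrightarrow> open S \<and> (\<forall>x\<in>S. cd cscale cscale f x)"
  by (simp add: holo_on_def cd_def)

lemma holo2_on_cd: "holo2_on f S \<longleftrightarrow> open S \<and> (\<forall>x\<in>S. cd pscale cscale f x)"
  by (simp add: holo2_on_def cd_def pscale_def)

lemma cd_chain:
  assumes "cd sB sC g (f x)" "cd sA sB f x"
  shows "cd sA sC (\<lambda>y. g (f y)) x"
proof -
  obtain Dg where g: "(g has_derivative Dg) (at (f x))" "\<forall>c v. Dg (sB c v) = sC c (Dg v)"
    using assms(1) by (auto simp: cd_def)
  obtain Df where f: "(f has_derivative Df) (at x)" "\<forall>c v. Df (sA c v) = sB c (Df v)"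
    using assms(2) by (auto simp: cd_def)
  have "((\<lambda>y. g (f y)) has_derivative (\<lambda>v. Dg (Df v))) (at x)"
    using diff_chain_at[OF f(1) g(1)] by (simp add: o_def)
  then show ?thesis unfolding cd_def using f(2) g(2) by auto
qed

lemma cd_cong:
  assumes "cd sA sB f x" "open T" "x \<in> T" "\<And>y. y \<in> T \<Longrightarrow> f y = g y"
  shows "cd sA sB g x"
  using assms has_derivative_transform_within_open unfolding cd_def by metis

lemma cd_cong_ev:
  assumes "cd sA sB f x" "eventually (\<lambda>y. f y = g y) (nhds x)"
  shows "cd sA sB g x"
  using assms(2) unfolding eventually_nhds using cd_cong[OF assms(1)] by metis

lemma cd_const: "cd sA cscale (\<lambda>_. c) x"
  unfolding cd_def by (rule exI[of _ "\<lambda>_. 0"]) auto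

lemma cd_id: "cd s s (\<lambda>y. y) x"
  unfolding cd_def by (rule exI[of _ "\<lambda>v. v"]) (auto intro: has_derivative_ident)

lemma cd_pair:
  assumes "cd sA cscale f x" "cd sA cscale g x"
  shows "cd sA pscale (\<lambda>y. (f y, g y)) x"
proof -
  obtain Df where f: "(f has_derivative Df) (at x)" "\<forall>c v. Df (sA c v) = cscale c (Df v)"
    using assms(1) by (auto simp: cd_def)
  obtain Dg where g: "(g has_derivative Dg) (at x)" "\<forall>c v. Dg (sA c v) = cscale c (Dg v)"
    using assms(2) by (auto simp: cd_def)
  show ?thesis unfolding cd_def
    by (rule exI[of _ "\<lambda>v. (Df v, Dg v)"]) (auto intro!: has_derivative_Pair f g simp: pscale_def f(2) g(2))
qed

lemma cd_fst: "cd pscale cscale fst p"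
  unfolding cd_def by (rule exI[of _ fst]) (auto intro: has_derivative_fst[OF has_derivative_ident] simp: pscale_def)

lemma cd_snd: "cd pscale cscale snd p"
  unfolding cd_def by (rule exI[of _ snd]) (auto intro: has_derivative_snd[OF has_derivative_ident] simp: pscale_def)

lemma cd_add_const: "cd cscale cscale (\<lambda>y. a + y) x"
  unfolding cd_def by (rule exI[of _ "\<lambda>v. v"]) (auto intro!: derivative_eq_intros)

lemma cd_line: "cd (*) cscale (\<lambda>s. a + cscale s w) s0"
  unfolding cd_def
proof (rule exI[of _ "\<lambda>s. cscale s w"], intro conjI allI)
  show "((\<lambda>s. a + cscale s w) has_derivative (\<lambda>s. cscale s w)) (at s0)"
  proof -
    have "((\<lambda>s. cscale s w) has_derivative (\<lambda>s. cscale s w)) (at s0)"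
      by (rule bounded_linear_imp_has_derivative[OF bounded_linear_cscale_left])
    then have "((\<lambda>s. a + cscale s w) has_derivative (\<lambda>s. 0 + cscale s w)) (at s0)"
      by (rule has_derivative_add[OF has_derivative_const])
    then show ?thesis by simp
  qed
qed (simp add: cscale_mult)

lemma cd_nth: "cd sA cscale f x \<Longrightarrow> cd sA (*) (\<lambda>y. f y $ j) x"
proof -
  assume "cd sA cscale f x"
  then obtain D where D: "(f has_derivative D) (at x)" "\<forall>c v. D (sA c v) = cscale c (D v)"
    by (auto simp: cd_def)
  have "((\<lambda>y. f y $ j) has_derivative (\<lambda>v. D v $ j)) (at x)"
    using diff_chain_at[OF D(1) bounded_linear_imp_has_derivative[OF bounded_linear_vec_nth]] by (simp add: o_def)
  then show ?thesis unfolding cd_def using D(2) by auto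
qed

lemma cd_to1: "cd sA (*) f x \<Longrightarrow> cd sA cscale (\<lambda>y. (\<chi> i::1. f y)) x"
proof -
  assume "cd sA (*) f x"
  then obtain D where D: "(f has_derivative D) (at x)" "\<forall>c v. D (sA c v) = c * D v"
    by (auto simp: cd_def)
  have bl: "bounded_linear (\<lambda>a::complex. (\<chi> i::1. a))"
    by (rule linear_conv_bounded_linear[THEN iffD1], rule linearI) (auto simp: vec_eq_iff)
  have "((\<lambda>y. (\<chi> i::1. f y)) has_derivative (\<lambda>v. (\<chi> i::1. D v))) (at x)"
    using diff_chain_at[OF D(1) bounded_linear_imp_has_derivative[OF bl]] by (simp add: o_def)
  then show ?thesis unfolding cd_def using D(2) by (auto simp: vec_eq_iff cscale_def)
qed

lemma cd_isCont: "cd sA sB f x \<Longrightarrow> isCont f x"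
  unfolding cd_def using has_derivative_continuous by blast

lemma cd_field: "cd (*) (*) f x \<Longrightarrow> f field_differentiable (at x)"
  unfolding cd_def field_differentiable_def
proof (elim exE conjE)
  fix D assume D: "(f has_derivative D) (at x)" "\<forall>c v. D (c * v) = c * D v"
  have "D = (\<lambda>h. D 1 * h)" using D(2) by (metis mult.right_neutral mult.commute)
  then have "(f has_field_derivative D 1) (at x)" using D(1)
    by (simp add: has_field_derivative_def)
  then show "\<exists>f'. (f has_field_derivative f') (at x)" by blast
qed

lemma isCont_nbhd:
  assumes "isCont F y" "open S" "F y \<in> S"
  obtains T where "open T" "y \<in> T" "\<And>z. z \<in> T \<Longrightarrow> F z \<in> S"
  using assms continuous_at_open by metis

lemma chart_facts:
  assumes "is_chart \<kappa> U"
  shows "open U" "open (\<kappa> ` U)" "inj_on \<kappa> U" "continuous_on U \<kappa>"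
    "continuous_on (\<kappa> ` U) (inv_into U \<kappa>)"
  using assms by (auto simp: is_chart_def)

lemma atlas_chart: "complex_atlas A \<Longrightarrow> (\<kappa>, U) \<in> A \<Longrightarrow> is_chart \<kappa> U"
  by (auto simp: complex_atlas_def)

lemma atlas_cover: "complex_atlas A \<Longrightarrow> \<exists>\<kappa> U. (\<kappa>, U) \<in> A \<and> x \<in> U"
  unfolding complex_atlas_def by (metis (no_types, lifting) UNIV_I UN_iff case_prod_conv surj_pair)

lemma atlas_trans: "complex_atlas A \<Longrightarrow> (\<phi>, U) \<in> A \<Longrightarrow> (\<psi>, V) \<in> A \<Longrightarrow>
   holo_on (\<psi> \<circ> inv_into U \<phi>) (\<phi> ` (U \<inter> V))"
  by (auto simp: complex_atlas_def)

lemma chart_image_open: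
  assumes "is_chart \<kappa> U" "open W" "W \<subseteq> U"
  shows "open (\<kappa> ` W)"
proof -
  have "\<kappa> ` W = inv_into U \<kappa> -` W \<inter> \<kappa> ` U"
  proof
    show "\<kappa> ` W \<subseteq> inv_into U \<kappa> -` W \<inter> \<kappa> ` U"
      using assms chart_facts(3)[OF assms(1)] by (auto simp: inv_into_f_f)
    show "inv_into U \<kappa> -` W \<inter> \<kappa> ` U \<subseteq> \<kappa> ` W"
      using chart_facts(3)[OF assms(1)] by (force simp: inv_into_f_f)
  qed
  then show ?thesis
    using chart_facts[OF assms(1)] assms(2) continuous_on_open_vimage by metis
qed

definition mh :: "(complex \<Rightarrow> 'e \<Rightarrow> 'e) \<Rightarrow> (('a::topological_space \<Rightarrow> complex^'n) \<times> 'a set) set \<Rightarrow> ('e::real_normed_vector \<Rightarrow> 'a) \<Rightarrow> 'e \<Rightarrow> bool" where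
  "mh sE A F y \<longleftrightarrow> isCont F y \<and> (\<forall>(\<psi>, V)\<in>A. F y \<in> V \<longrightarrow> cd sE cscale (\<lambda>z. \<psi> (F z)) y)"

lemma mhD: "mh sE A F y \<Longrightarrow> (\<psi>, V) \<in> A \<Longrightarrow> F y \<in> V \<Longrightarrow> cd sE cscale (\<lambda>z. \<psi> (F z)) y"
  by (auto simp: mh_def)

lemma mh_isCont: "mh sE A F y \<Longrightarrow> isCont F y"
  by (auto simp: mh_def)

lemma mh_one_chart:
  assumes A: "complex_atlas A" and c: "isCont F y" and ch: "(\<psi>, V) \<in> A" "F y \<in> V"
    and d: "cd sE cscale (\<lambda>z. \<psi> (F z)) y"
  shows "mh sE A F y"
  unfolding mh_def
proof (intro conjI c ballI impI, clarify)
  fix \<psi>' V' assume ch': "(\<psi>', V') \<in> A" "F y \<in> V'"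
  have cV: "is_chart \<psi> V" and cV': "is_chart \<psi>' V'" using A ch ch' atlas_chart by blast+
  have "holo_on (\<psi>' \<circ> inv_into V \<psi>) (\<psi> ` (V \<inter> V'))" using atlas_trans[OF A ch(1) ch'(1)] .
  moreover have "\<psi> (F y) \<in> \<psi> ` (V \<inter> V')" using ch ch' by auto
  ultimately have "cd cscale cscale (\<psi>' \<circ> inv_into V \<psi>) (\<psi> (F y))"
    by (auto simp: holo_on_cd)
  from cd_chain[OF this d] have 1: "cd sE cscale (\<lambda>z. (\<psi>' \<circ> inv_into V \<psi>) (\<psi> (F z))) y" .
  have "open (V \<inter> V')" using chart_facts(1)[OF cV] chart_facts(1)[OF cV'] by auto
  then obtain T where T: "open T" "y \<in> T" "\<And>z. z \<in> T \<Longrightarrow> F z \<in> V \<inter> V'"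
    using isCont_nbhd[OF c] ch ch' by blast
  show "cd sE cscale (\<lambda>z. \<psi>' (F z)) y"
    apply (rule cd_cong[OF 1 T(1,2)])
    using T(3) chart_facts(3)[OF cV] by (auto simp: inv_into_f_f)
qed

lemma holo_map_cont: "holo_map A B f \<Longrightarrow> continuous_on UNIV f"
  by (simp add: holo_map_def)

lemma holo_map_isCont: "holo_map A B f \<Longrightarrow> isCont f x"
  using holo_map_cont continuous_on_eq_continuous_at open_UNIV by blast

lemma mh_comp_holo_map:
  fixes F :: "'e::real_normed_vector \<Rightarrow> 'a::t2_space" and f :: "'a \<Rightarrow> 'b::t2_space"
  assumes A: "complex_atlas A" and B: "complex_atlas B" and f: "holo_map A B f" and F: "mh sE A F y"
  shows "mh sE B (\<lambda>z. f (F z)) y"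
proof -
  obtain \<kappa> U where kU: "(\<kappa>, U) \<in> A" "F y \<in> U" using atlas_cover[OF A] by blast
  have cU: "is_chart \<kappa> U" using A kU atlas_chart by blast
  obtain \<psi> V where pV: "(\<psi>, V) \<in> B" "f (F y) \<in> V" using atlas_cover[OF B] by blast
  have c: "isCont (\<lambda>z. f (F z)) y"
  proof -
    have "isCont f (F y)" using holo_map_cont[OF f] continuous_on_eq_continuous_at open_UNIV by blast
    then show ?thesis using continuous_at_compose[OF mh_isCont[OF F]] by (simp add: o_def)
  qed
  have "holo_on (\<psi> \<circ> f \<circ> inv_into U \<kappa>) (\<kappa> ` (U \<inter> f -` V))"
    using f kU pV unfolding holo_map_def by blast
  moreover have "\<kappa> (F y) \<in> \<kappa> ` (U \<inter> f -` V)" using kU pV by auto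
  ultimately have "cd cscale cscale (\<psi> \<circ> f \<circ> inv_into U \<kappa>) (\<kappa> (F y))"
    by (auto simp: holo_on_cd)
  from cd_chain[OF this mhD[OF F kU]] have 1: "cd sE cscale (\<lambda>z. (\<psi> \<circ> f \<circ> inv_into U \<kappa>) (\<kappa> (F z))) y" .
  obtain T where T: "open T" "y \<in> T" "\<And>z. z \<in> T \<Longrightarrow> F z \<in> U"
    using isCont_nbhd[OF mh_isCont[OF F] chart_facts(1)[OF cU] kU(2)] by blast
  have "cd sE cscale (\<lambda>z. \<psi> (f (F z))) y"
    apply (rule cd_cong[OF 1 T(1,2)])
    using T(3) chart_facts(3)[OF cU] by (auto simp: inv_into_f_f)
  then show ?thesis by (rule mh_one_chart[OF B c pV])
qed

lemma lie_atlas: "complex_lie_group A \<Longrightarrow> complex_atlas A"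
  by (simp add: complex_lie_group_def)

lemma lie_uminus: "complex_lie_group A \<Longrightarrow> holo_map A A uminus"
  by (simp add: complex_lie_group_def)

lemma lie_add_isCont:
  assumes "complex_lie_group (A :: (('a::{t2_space, group_add} \<Rightarrow> complex^'n) \<times> 'a set) set)"
  shows "isCont (\<lambda>p::'a \<times> 'a. fst p + snd p) q"
  using assms unfolding complex_lie_group_def
  using continuous_on_eq_continuous_at open_UNIV by blast

lemma lie_holo2:
  assumes G: "complex_lie_group A" and a: "(\<phi>, U) \<in> A" "(\<phi>', U') \<in> A" "(\<psi>, V) \<in> A"
  shows "holo2_on (\<lambda>(z, w). \<psi> (inv_into U \<phi> z + inv_into U' \<phi>' w))
          {(z, w). z \<in> \<phi> ` U \<and> w \<in> \<phi>' ` U' \<and> inv_into U \<phi> z + inv_into U' \<phi>' w \<in> V}"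
proof -
  have h: "\<forall>(\<phi>, U)\<in>A. \<forall>(\<phi>', U')\<in>A. \<forall>(\<psi>, V)\<in>A.
        holo2_on (\<lambda>(z, w). \<psi> (inv_into U \<phi> z + inv_into U' \<phi>' w))
          {(z, w). z \<in> \<phi> ` U \<and> w \<in> \<phi>' ` U' \<and> inv_into U \<phi> z + inv_into U' \<phi>' w \<in> V}"
    using G unfolding complex_lie_group_def by (elim conjE)
  have h1: "\<forall>(\<phi>', U')\<in>A. \<forall>(\<psi>, V)\<in>A.
        holo2_on (\<lambda>(z, w). \<psi> (inv_into U \<phi> z + inv_into U' \<phi>' w))
          {(z, w). z \<in> \<phi> ` U \<and> w \<in> \<phi>' ` U' \<and> inv_into U \<phi> z + inv_into U' \<phi>' w \<in> V}"
    using bspec[OF h a(1)] by simp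
  have h2: "\<forall>(\<psi>, V)\<in>A.
        holo2_on (\<lambda>(z, w). \<psi> (inv_into U \<phi> z + inv_into U' \<phi>' w))
          {(z, w). z \<in> \<phi> ` U \<and> w \<in> \<phi>' ` U' \<and> inv_into U \<phi> z + inv_into U' \<phi>' w \<in> V}"
    using bspec[OF h1 a(2)] by simp
  show ?thesis using bspec[OF h2 a(3)] by simp
qed

lemma mh_add:
  assumes G: "complex_lie_group A" and F: "mh sE A F y" and F': "mh sE A F' y"
  shows "mh sE A (\<lambda>z. F z + F' z) y"
proof -
  have A: "complex_atlas A" using G by (simp add: complex_lie_group_def)
  obtain \<kappa> U where kU: "(\<kappa>, U) \<in> A" "F y \<in> U" using atlas_cover[OF A] by blast
  obtain \<kappa>' U' where kU': "(\<kappa>', U') \<in> A" "F' y \<in> U'" using atlas_cover[OF A] by blast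
  obtain \<psi> V where pV: "(\<psi>, V) \<in> A" "F y + F' y \<in> V" using atlas_cover[OF A] by blast
  have cU: "is_chart \<kappa> U" using A kU atlas_chart by blast
  have cU': "is_chart \<kappa>' U'" using A kU' atlas_chart by blast
  have cp: "isCont (\<lambda>z. (F z, F' z)) y"
    using mh_isCont[OF F] mh_isCont[OF F'] by (intro continuous_Pair)
  have c: "isCont (\<lambda>z. F z + F' z) y"
    using continuous_at_compose[OF cp lie_add_isCont[OF G]] by (simp add: o_def)
  let ?M = "\<lambda>(z, w). \<psi> (inv_into U \<kappa> z + inv_into U' \<kappa>' w)"
  let ?W = "{(z, w). z \<in> \<kappa> ` U \<and> w \<in> \<kappa>' ` U' \<and> inv_into U \<kappa> z + inv_into U' \<kappa>' w \<in> V}"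
  have "holo2_on ?M ?W" by (rule lie_holo2[OF G kU(1) kU'(1) pV(1)])
  moreover have "(\<kappa> (F y), \<kappa>' (F' y)) \<in> ?W"
    using kU kU' pV chart_facts(3)[OF cU] chart_facts(3)[OF cU'] by (auto simp: inv_into_f_f)
  ultimately have "cd pscale cscale ?M (\<kappa> (F y), \<kappa>' (F' y))"
    unfolding holo2_on_cd by (elim conjE) (erule bspec)
  from cd_chain[OF this cd_pair[OF mhD[OF F kU] mhD[OF F' kU']]]
  have 1: "cd sE cscale (\<lambda>z. ?M (\<kappa> (F z), \<kappa>' (F' z))) y" .
  obtain T where T: "open T" "y \<in> T" "\<And>z. z \<in> T \<Longrightarrow> F z \<in> U"
    using isCont_nbhd[OF mh_isCont[OF F] chart_facts(1)[OF cU] kU(2)] by blast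
  obtain T' where T': "open T'" "y \<in> T'" "\<And>z. z \<in> T' \<Longrightarrow> F' z \<in> U'"
    using isCont_nbhd[OF mh_isCont[OF F'] chart_facts(1)[OF cU'] kU'(2)] by blast
  have "cd sE cscale (\<lambda>z. \<psi> (F z + F' z)) y"
    apply (rule cd_cong[OF 1, of "T \<inter> T'"])
    using T T' chart_facts(3)[OF cU] chart_facts(3)[OF cU'] by (auto simp: inv_into_f_f)
  then show ?thesis by (rule mh_one_chart[OF A c pV])
qed

lemma mh_uminus:
  assumes G: "complex_lie_group A" and F: "mh sE A F y"
  shows "mh sE A (\<lambda>z. - F z) y"
  using mh_comp_holo_map[OF lie_atlas[OF G] lie_atlas[OF G] lie_uminus[OF G] F] .

lemma mh_diff:
  assumes G: "complex_lie_group A" and F: "mh sE A F y" and F': "mh sE A F' y"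
  shows "mh sE A (\<lambda>z. F z - F' z) y"
  unfolding diff_conv_add_uminus by (rule mh_add[OF G F mh_uminus[OF G F']])

lemma mh_inv_chart:
  assumes A: "complex_atlas A" and kU: "(\<kappa>, U) \<in> A" and z: "z \<in> \<kappa> ` U"
  shows "mh cscale A (inv_into U \<kappa>) z"
proof -
  have cU: "is_chart \<kappa> U" using A kU atlas_chart by blast
  have c: "isCont (inv_into U \<kappa>) z"
    using chart_facts(2,5)[OF cU] z continuous_on_eq_continuous_at by blast
  have "cd cscale cscale (\<lambda>w. \<kappa> (inv_into U \<kappa> w)) z"
    by (rule cd_cong[OF cd_id chart_facts(2)[OF cU] z]) (auto simp: f_inv_into_f)
  moreover have "inv_into U \<kappa> z \<in> U" using z by (auto intro: inv_into_into)
  ultimately show ?thesis using mh_one_chart[OF A c kU(1)] by blast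
qed

lemma mh_precomp:
  assumes F: "mh sE A F (e x)" and e: "cd sX sE e x"
  shows "mh sX A (\<lambda>z. F (e z)) x"
  unfolding mh_def
proof (intro conjI)
  show "isCont (\<lambda>z. F (e z)) x"
    using continuous_at_compose[OF cd_isCont[OF e] mh_isCont[OF F]] by (simp add: o_def)
  show "\<forall>(\<psi>, V)\<in>A. F (e x) \<in> V \<longrightarrow> cd sX cscale (\<lambda>z. \<psi> (F (e z))) x"
  proof (intro ballI impI, clarify)
  fix \<psi> V assume "(\<psi>, V) \<in> A" "F (e x) \<in> V"
  from cd_chain[OF mhD[OF F this] e] show "cd sX cscale (\<lambda>z. \<psi> (F (e z))) x" .
  qed
qed

lemma mh_const: "mh sE A (\<lambda>_. c) y"
  unfolding mh_def by (auto intro: cd_const)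

lemma holo_map_mh:
  fixes f :: "'a::t2_space \<Rightarrow> 'b::t2_space"
  assumes A: "complex_atlas A" and B: "complex_atlas B" and f: "holo_map A B f"
    and kU: "(\<kappa>, U) \<in> A" and z: "z \<in> \<kappa> ` U"
  shows "mh cscale B (\<lambda>w. f (inv_into U \<kappa> w)) z"
  using mh_comp_holo_map[OF A B f mh_inv_chart[OF A kU z]] .

lemma mh_holo_map:
  assumes A: "complex_atlas A" and B: "complex_atlas B" and c: "continuous_on UNIV f"
    and h: "\<And>\<kappa> U z. (\<kappa>, U) \<in> A \<Longrightarrow> z \<in> \<kappa> ` U \<Longrightarrow> mh cscale B (\<lambda>w. f (inv_into U \<kappa> w)) z"
  shows "holo_map A B f"
  unfolding holo_map_def
proof (intro conjI c ballI, clarify)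
  fix \<kappa> U \<psi> V assume kU: "(\<kappa>, U) \<in> A" and pV: "(\<psi>, V) \<in> B"
  have cU: "is_chart \<kappa> U" using A kU atlas_chart by blast
  have cV: "is_chart \<psi> V" using B pV atlas_chart by blast
  have "open (f -` V \<inter> UNIV)"
    using c chart_facts(1)[OF cV] continuous_on_open_vimage[OF open_UNIV] by blast
  then have "open (U \<inter> f -` V)" using chart_facts(1)[OF cU] by (simp add: open_Int)
  then have o: "open (\<kappa> ` (U \<inter> f -` V))" using chart_image_open[OF cU] by blast
  show "holo_on (\<psi> \<circ> f \<circ> inv_into U \<kappa>) (\<kappa> ` (U \<inter> f -` V))"
    unfolding holo_on_cd
  proof (intro conjI o ballI)
    fix z assume "z \<in> \<kappa> ` (U \<inter> f -` V)"
    then obtain x where x: "x \<in> U" "f x \<in> V" "z = \<kappa> x" by auto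
    have iv: "inv_into U \<kappa> z = x" using x chart_facts(3)[OF cU] by (simp add: inv_into_f_f)
    have zk: "z \<in> \<kappa> ` U" using x by auto
    have fv: "f (inv_into U \<kappa> z) \<in> V" using iv x by simp
    have "cd cscale cscale (\<lambda>w. \<psi> (f (inv_into U \<kappa> w))) z"
      using mhD[OF h[OF kU zk] pV fv] .
    then show "cd cscale cscale (\<psi> \<circ> f \<circ> inv_into U \<kappa>) z" by (simp add: o_def)
  qed
qed

lemma cd_holo_fun:
  assumes A: "complex_atlas A" and c: "continuous_on UNIV f"
    and h: "\<And>\<kappa> U z. (\<kappa>, U) \<in> A \<Longrightarrow> z \<in> \<kappa> ` U \<Longrightarrow> cd cscale (*) (\<lambda>w. f (inv_into U \<kappa> w)) z"
  shows "holo_fun A f"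
  unfolding holo_fun_def
proof (intro conjI c ballI, clarify)
  fix \<kappa> U assume kU: "(\<kappa>, U) \<in> A"
  show "holo_on (\<lambda>z. \<chi> i::1. f (inv_into U \<kappa> z)) (\<kappa> ` U)"
    unfolding holo_on_cd
  proof (intro conjI ballI)
    show "open (\<kappa> ` U)" using chart_facts(2)[OF atlas_chart[OF A kU]] .
    fix z assume "z \<in> \<kappa> ` U"
    from cd_to1[OF h[OF kU this]] show "cd cscale cscale (\<lambda>z. \<chi> i::1. f (inv_into U \<kappa> z)) z" .
  qed
qed

lemma norm_cscale: "norm (cscale c (v::complex^'n)) = norm c * norm v"
proof -
  have "norm (cscale c v) = L2_set (\<lambda>i. norm c * norm (v $ i)) UNIV"
    by (simp add: norm_vec_def norm_mult)
  also have "\<dots> = norm c * L2_set (\<lambda>i. norm (v $ i)) UNIV"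
    by (simp add: L2_set_right_distrib)
  finally show ?thesis by (simp add: norm_vec_def)
qed

lemma norm_pscale: "norm (pscale c p) = norm c * norm p"
proof -
  have "norm (pscale c p) = sqrt ((norm c * norm (fst p))\<^sup>2 + (norm c * norm (snd p))\<^sup>2)"
    by (simp add: pscale_def norm_Pair norm_cscale)
  also have "\<dots> = sqrt ((norm c)\<^sup>2 * ((norm (fst p))\<^sup>2 + (norm (snd p))\<^sup>2))"
    by (rule arg_cong[where f=sqrt]) (simp add: power_mult_distrib algebra_simps)
  also have "\<dots> = norm c * sqrt ((norm (fst p))\<^sup>2 + (norm (snd p))\<^sup>2)"
    unfolding real_sqrt_mult by simp
  also have "\<dots> = norm c * norm p" by (cases p) (simp add: norm_Pair)
  finally show ?thesis .
qed

lemma bounded_linear_pscale_left: "bounded_linear (\<lambda>c. pscale c w)"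
  unfolding pscale_def
  by (intro bounded_linear_Pair bounded_linear_cscale_left)

lemma pscale_mult: "pscale (a * b) w = pscale a (pscale b w)"
  by (simp add: pscale_def cscale_mult)

lemma cscale_0_left[simp]: "cscale 0 v = 0" by (simp add: vec_eq_iff)
lemma pscale_0_left[simp]: "pscale 0 w = 0" by (simp add: pscale_def zero_prod_def)

lemma circ_norm: "norm (circlepath 0 r t) = \<bar>r\<bar>"
  by (simp add: circlepath norm_mult)

lemma circ_cont: "continuous_on X (circlepath 0 r)"
  by (simp add: circlepath continuous_intros)

lemma circ_deriv: "vector_derivative (circlepath 0 r) (at t) = 2 * pi * \<i> * r * exp (2 * of_real pi * \<i> * t)"
  by (rule vector_derivative_circlepath)

lemma line_field_deriv:
  fixes P :: "(complex^'n) \<times> (complex^'n) \<Rightarrow> complex"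
  assumes d: "(P has_derivative D) (at (p + pscale s w))" and lin: "\<forall>c v. D (pscale c v) = c * D v"
  shows "((\<lambda>s. P (p + pscale s w)) has_field_derivative D w) (at s)"
proof -
  have l: "((\<lambda>s. p + pscale s w) has_derivative (\<lambda>h. pscale h w)) (at s)"
  proof -
    have "((\<lambda>s. pscale s w) has_derivative (\<lambda>h. pscale h w)) (at s)"
      by (rule bounded_linear_imp_has_derivative[OF bounded_linear_pscale_left])
    then have "((\<lambda>s. p + pscale s w) has_derivative (\<lambda>h. 0 + pscale h w)) (at s)"
      by (rule has_derivative_add[OF has_derivative_const])
    then show ?thesis by simp
  qed
  have "((\<lambda>s. P (p + pscale s w)) has_derivative (\<lambda>h. D (pscale h w))) (at s)"
    using diff_chain_at[OF l d] by (simp add: o_def)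
  moreover have "(\<lambda>h. D (pscale h w)) = (\<lambda>h. D w * h)"
    unfolding fun_eq_iff by (metis lin mult.commute)
  ultimately show ?thesis by (simp add: has_field_derivative_def)
qed

lemma cauchy_line_deriv:
  fixes P :: "(complex^'n) \<times> (complex^'n) \<Rightarrow> complex"
  assumes S: "\<And>s. norm s \<le> r \<Longrightarrow> p + pscale s w \<in> S" and r: "r > 0"
    and d: "\<And>q. q \<in> S \<Longrightarrow> (P has_derivative DP q) (at q)"
    and lin: "\<And>q c v. q \<in> S \<Longrightarrow> DP q (pscale c v) = c * DP q v"
  shows "DP p w = 1 / (2 * of_real pi * \<i>) * integral {0..1}
            (\<lambda>t. P (p + pscale (circlepath 0 r t) w) / (circlepath 0 r t)\<^sup>2 * vector_derivative (circlepath 0 r) (at t))"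
proof -
  let ?g = "\<lambda>s. P (p + pscale s w)"
  have fd: "(?g has_field_derivative DP (p + pscale s w) w) (at s)" if "norm s \<le> r" for s
    using line_field_deriv[OF d[OF S[OF that]]] lin S[OF that] by blast
  have cont: "continuous_on (cball 0 r) ?g"
    by (rule continuous_at_imp_continuous_on) (auto intro!: DERIV_isCont[OF fd])
  have hol: "?g holomorphic_on ball 0 r"
    unfolding holomorphic_on_def field_differentiable_def
  proof
    fix x :: complex assume "x \<in> ball 0 r"
    then have "norm x \<le> r" by (simp add: dist_norm)
    from has_field_derivative_at_within[OF fd[OF this]]
    show "\<exists>f'. (?g has_field_derivative f') (at x within ball 0 r)" by blast
  qed
  from Cauchy_derivative_integral_circlepath(2)[OF cont hol, of 0] r
  have "(?g has_field_derivative (1 / (2 * of_real pi * \<i>) * contour_integral (circlepath 0 r) (\<lambda>u. ?g u / (u - 0)\<^sup>2))) (at 0)"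
    by simp
  moreover have "(?g has_field_derivative DP p w) (at 0)" using fd[of 0] r by simp
  ultimately have "DP p w = 1 / (2 * of_real pi * \<i>) * contour_integral (circlepath 0 r) (\<lambda>u. ?g u / (u - 0)\<^sup>2)"
    using DERIV_unique by blast
  then show ?thesis by (simp add: contour_integral_integral)
qed

lemma has_derivative_cont_on:
  assumes "open S" "\<And>q. q \<in> S \<Longrightarrow> (P has_derivative DP q) (at q)"
  shows "continuous_on S P"
  using assms by (intro continuous_at_imp_continuous_on) (auto intro: has_derivative_continuous)

lemma dir_deriv_cont:
  fixes P :: "(complex^'n) \<times> (complex^'n) \<Rightarrow> complex"
  assumes S: "open S"
    and d: "\<And>q. q \<in> S \<Longrightarrow> (P has_derivative DP q) (at q)"
    and lin: "\<And>q c v. q \<in> S \<Longrightarrow> DP q (pscale c v) = c * DP q v"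
  shows "continuous_on S (\<lambda>q. DP q w)"
proof (cases "w = 0")
  case True
  have "DP q 0 = 0" if "q \<in> S" for q
    using lin[OF that, of 0 0] by (simp add: pscale_def zero_prod_def)
  then show ?thesis using True continuous_on_const continuous_on_cong by (metis (no_types, lifting))
next
  case False
  then have nw: "norm w > 0" by simp
  have PS: "continuous_on S P" using has_derivative_cont_on[OF S d] .
  show ?thesis
    unfolding continuous_on_eq_continuous_at[OF S]
  proof
    fix p0 assume p0: "p0 \<in> S"
    obtain e where e: "e > 0" "ball p0 e \<subseteq> S" using S p0 openE by blast
    define \<delta> where "\<delta> = e / 2"
    define r where "r = \<delta> / norm w"
    have \<delta>: "\<delta> > 0" using e by (simp add: \<delta>_def)
    have r: "r > 0" using \<delta> nw by (simp add: r_def)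
    have inS: "p + pscale s w \<in> S" if "p \<in> ball p0 \<delta>" "norm s \<le> r" for p s
    proof -
      have "norm (pscale s w) \<le> \<delta>"
        using that(2) nw by (simp add: norm_pscale r_def field_simps)
      then have "dist p0 (p + pscale s w) < e"
        using that(1) norm_triangle_ineq[of "p - p0" "pscale s w"]
        by (simp add: dist_norm \<delta>_def norm_minus_commute algebra_simps)
      then show ?thesis using e(2) by auto
    qed
    let ?c = "circlepath 0 r"
    let ?F = "\<lambda>p t. P (p + pscale (?c t) w) / (?c t)\<^sup>2 * vector_derivative ?c (at t)"
    have eq: "DP p w = 1 / (2 * of_real pi * \<i>) * integral {0..1} (?F p)" if "p \<in> ball p0 \<delta>" for p
      by (rule cauchy_line_deriv[OF _ r d lin]) (use inS that in auto)
    have cF: "continuous_on (ball p0 \<delta> \<times> cbox 0 1) (\<lambda>(p, t). ?F p t)"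
    proof -
      have c0: "continuous_on (ball p0 \<delta> \<times> cbox 0 1) (\<lambda>x. fst x + pscale (?c (snd x)) w)"
        by (intro continuous_intros continuous_on_compose2[OF bounded_linear_pscale_left[THEN linear_continuous_on]]
              continuous_on_compose2[OF circ_cont[of UNIV r]]) auto
      have sub: "(\<lambda>x. fst x + pscale (?c (snd x)) w) ` (ball p0 \<delta> \<times> cbox 0 1) \<subseteq> S"
      proof (rule image_subsetI)
        fix x assume x: "x \<in> ball p0 \<delta> \<times> cbox 0 (1::real)"
        have "norm (?c (snd x)) \<le> r" using circ_norm[of r "snd x"] r by simp
        moreover have "fst x \<in> ball p0 \<delta>" using x by auto
        ultimately show "fst x + pscale (?c (snd x)) w \<in> S" using inS by blast
      qed
      have c1': "continuous_on (ball p0 \<delta> \<times> cbox 0 1) (\<lambda>x. P (fst x + pscale (?c (snd x)) w))"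
        by (rule continuous_on_compose2[OF PS c0 sub])
      have cs: "continuous_on (ball p0 \<delta> \<times> cbox 0 1) (\<lambda>x. ?c (snd x))"
        by (rule continuous_on_compose2[OF circ_cont[of UNIV r] continuous_on_snd[OF continuous_on_id]]) simp
      have nz: "?c t \<noteq> 0" for t
        using circ_norm[of r t] r by auto
      have c2a: "continuous_on (ball p0 \<delta> \<times> cbox 0 1) (\<lambda>x. 1 / (?c (snd x))\<^sup>2)"
        by (intro continuous_on_divide continuous_on_const continuous_on_power cs) (use nz in simp)
      have c2b: "continuous_on (ball p0 \<delta> \<times> cbox 0 (1::real)) (\<lambda>x. vector_derivative ?c (at (snd x)))"
        unfolding circ_deriv by (intro continuous_intros)
      have "continuous_on (ball p0 \<delta> \<times> cbox 0 1) (\<lambda>x. ?F (fst x) (snd x))"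
        using continuous_on_mult[OF c1' continuous_on_mult[OF c2a c2b]] by (simp add: divide_inverse mult.assoc)
      then show ?thesis unfolding case_prod_unfold .
    qed
    have "continuous_on (ball p0 \<delta>) (\<lambda>p. integral (cbox 0 1) (?F p))"
      by (rule integral_continuous_on_param[OF cF])
    then have "continuous_on (ball p0 \<delta>) (\<lambda>p. 1 / (2 * of_real pi * \<i>) * integral {0..1} (?F p))"
      by (intro continuous_intros) auto
    then have "continuous_on (ball p0 \<delta>) (\<lambda>p. DP p w)"
      using eq continuous_on_cong by (metis (no_types, lifting))
    then show "isCont (\<lambda>q. DP q w) p0"
      using continuous_on_eq_continuous_at[OF open_ball] \<delta> by force
  qed
qed

lemma deriv_holo:
  fixes P :: "(complex^'n) \<times> (complex^'n) \<Rightarrow> complex"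
  assumes W: "open W" and hol: "\<And>p. p \<in> W \<Longrightarrow> cd pscale (*) P p" and p0: "(y0, z0) \<in> W"
  shows "cd cscale (*) (\<lambda>z. deriv (\<lambda>s. P (y0 + cscale s v, z)) 0) z0"
proof -
  define DP where "DP p = (SOME D. (P has_derivative D) (at p) \<and> (\<forall>c v. D (pscale c v) = c * D v))" for p
  have dDP: "(P has_derivative DP p) (at p) \<and> (\<forall>c v. DP p (pscale c v) = c * DP p v)" if "p \<in> W" for p
  proof -
    have ex: "\<exists>D. (P has_derivative D) (at p) \<and> (\<forall>c v. D (pscale c v) = c * D v)"
      using hol[OF that] unfolding cd_def .
    show ?thesis unfolding DP_def by (rule someI_ex[OF ex])
  qed
  have d: "\<And>p. p \<in> W \<Longrightarrow> (P has_derivative DP p) (at p)" using dDP by blast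
  have lin: "\<And>p c v. p \<in> W \<Longrightarrow> DP p (pscale c v) = c * DP p v" using dDP by blast
  obtain e where e: "e > 0" "ball (y0, z0) e \<subseteq> W" using W p0 openE by blast
  define \<delta> where "\<delta> = e / 2"
  define r where "r = \<delta> / (norm v + 1)"
  have \<delta>: "\<delta> > 0" using e by (simp add: \<delta>_def)
  have nv1: "0 < norm v + 1" using norm_ge_zero[of v] by linarith
  have r: "r > 0" unfolding r_def using \<delta> nv1 by (rule divide_pos_pos)
  have pv: "pscale s (v, 0) = (cscale s v, 0)" for s by (simp add: pscale_def)
  have inW: "(y0, z) + pscale s (v, 0) \<in> W" if "z \<in> ball z0 \<delta>" "norm s \<le> r" for z s
  proof -
    have "norm (cscale s v) \<le> r * norm v" using that(2) by (simp add: norm_cscale mult_right_mono)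
    also have "\<dots> = \<delta> * (norm v / (norm v + 1))" by (simp add: r_def)
    also have "\<dots> \<le> \<delta> * 1"
      by (rule mult_left_mono) (use nv1 \<delta> in auto)
    also have "\<dots> = \<delta>" by simp
    finally have n1: "norm (cscale s v) \<le> \<delta>" .
    have "dist (y0, z0) (y0 + cscale s v, z) \<le> norm (cscale s v) + dist z0 z"
      using norm_Pair_le[of "- cscale s v" "z0 - z"] by (simp add: dist_norm)
    also have "\<dots> < e" using n1 that(1) by (simp add: \<delta>_def dist_commute)
    finally show ?thesis using e(2) pv by auto
  qed
  let ?c = "circlepath 0 r"
  define K where "K t = vector_derivative ?c (at t) / (?c t)\<^sup>2" for t
  define q where "q z t = (y0, z) + pscale (?c t) (v, 0)" for z t
  define f where "f z t = P (q z t) * K t" for z t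
  have qW: "q z t \<in> W" if "z \<in> ball z0 \<delta>" for z t
    unfolding q_def by (rule inW[OF that]) (use circ_norm[of r t] r in simp)
  have eq: "deriv (\<lambda>s. P (y0 + cscale s v, z)) 0 = 1 / (2 * of_real pi * \<i>) * integral {0..1} (f z)"
    if z: "z \<in> ball z0 \<delta>" for z
  proof -
    have hfun: "(\<lambda>s. P (y0 + cscale s v, z)) = (\<lambda>s. P ((y0, z) + pscale s (v, 0)))"
      by (simp add: pv)
    have m: "(y0, z) \<in> W" using inW[OF z, of 0] r by simp
    have "((\<lambda>s. P ((y0, z) + pscale s (v, 0))) has_field_derivative DP (y0, z) (v, 0)) (at 0)"
      by (rule line_field_deriv) (use d[OF m] lin[OF m] in auto)
    then have "deriv (\<lambda>s. P (y0 + cscale s v, z)) 0 = DP (y0, z) (v, 0)"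
      unfolding hfun by (simp add: DERIV_imp_deriv)
    also have "\<dots> = 1 / (2 * of_real pi * \<i>) * integral {0..1}
            (\<lambda>t. P ((y0, z) + pscale (?c t) (v, 0)) / (?c t)\<^sup>2 * vector_derivative ?c (at t))"
      by (rule cauchy_line_deriv[OF _ r d lin]) (use inW[OF z] in auto)
    also have "(\<lambda>t. P ((y0, z) + pscale (?c t) (v, 0)) / (?c t)\<^sup>2 * vector_derivative ?c (at t)) = f z"
      by (simp add: fun_eq_iff f_def q_def K_def)
    finally show ?thesis .
  qed
  have cc: "continuous_on UNIV ?c" by (rule circ_cont)
  have nz: "?c t \<noteq> 0" for t using circ_norm[of r t] r by auto
  have cK: "continuous_on UNIV K"
    unfolding K_def circ_deriv
    by (intro continuous_intros cc) (use nz in simp)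
  have cq: "continuous_on UNIV (\<lambda>x. q (fst x) (snd x))"
    unfolding q_def
    by (intro continuous_intros continuous_on_compose2[OF bounded_linear_pscale_left[THEN linear_continuous_on]]
        continuous_on_compose2[OF cc]) auto
  have PW: "continuous_on W P" by (rule has_derivative_cont_on[OF W d])
  let ?U = "ball z0 \<delta>"
  let ?X = "?U \<times> cbox 0 (1::real)"
  have qX: "(\<lambda>x. q (fst x) (snd x)) ` ?X \<subseteq> W" using qW by auto
  have cDP: "continuous_on ?X (\<lambda>x. DP (q (fst x) (snd x)) w)" for w
    by (rule continuous_on_compose2[OF dir_deriv_cont[OF W d lin] continuous_on_subset[OF cq] qX]) auto
  define fx where "fx z t = Blinfun (\<lambda>h. DP (q z t) (0, h) * K t)" for z t
  have blDP: "bounded_linear (DP p)" if "p \<in> W" for p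
    using d[OF that] has_derivative_bounded_linear by blast
  have bl: "bounded_linear (\<lambda>h. DP (q z t) (0, h) * K t)" if "z \<in> ?U" for z t
  proof -
    have "bounded_linear (\<lambda>h::complex^'n. (0::complex^'n, h))"
      by (intro bounded_linear_Pair bounded_linear_zero bounded_linear_ident)
    from bounded_linear_compose[OF blDP[OF qW[OF that]] this]
    have "bounded_linear (\<lambda>h. DP (q z t) (0, h))" .
    from bounded_linear_compose[OF bounded_linear_mult_left this]
    show ?thesis .
  qed
  have fxa: "blinfun_apply (fx z t) = (\<lambda>h. DP (q z t) (0, h) * K t)" if "z \<in> ?U" for z t
    unfolding fx_def by (rule bounded_linear_Blinfun_apply[OF bl[OF that]])
  have fder: "((\<lambda>z. f z t) has_derivative blinfun_apply (fx z t)) (at z within ?U)"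
    if "z \<in> ?U" "t \<in> cbox 0 1" for z t
  proof -
    have qd: "((\<lambda>z. q z t) has_derivative (\<lambda>h. (0, h))) (at z)"
      unfolding q_def by (auto intro!: derivative_eq_intros)
    have "((\<lambda>z. P (q z t)) has_derivative (\<lambda>h. DP (q z t) (0, h))) (at z)"
      using diff_chain_at[OF qd d[OF qW[OF that(1)]]] by (simp add: o_def)
    from has_derivative_mult_left[OF this, of "K t"]
    have "((\<lambda>z. f z t) has_derivative (\<lambda>h. DP (q z t) (0, h) * K t)) (at z)"
      by (simp add: f_def)
    then show ?thesis using fxa[OF that(1)] by (simp add: has_derivative_at_withinI)
  qed
  have cfx: "continuous_on (?U \<times> cbox 0 1) (\<lambda>(z, t). fx z t)"
  proof (rule continuous_on_blinfun_componentwise)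
    fix i :: "complex^'n" assume "i \<in> Basis"
    have "continuous_on ?X (\<lambda>x. DP (q (fst x) (snd x)) (0, i) * K (snd x))"
      by (intro continuous_on_mult cDP continuous_on_compose2[OF cK]) (auto intro!: continuous_intros)
    then show "continuous_on ?X (\<lambda>x. blinfun_apply (case x of (z, t) \<Rightarrow> fx z t) i)"
      by (rule continuous_on_eq) (auto simp: fxa)
  qed
  have cf: "continuous_on ?X (\<lambda>x. f (fst x) (snd x))"
    unfolding f_def
    by (intro continuous_on_mult continuous_on_compose2[OF PW continuous_on_subset[OF cq] qX]
        continuous_on_compose2[OF cK]) (auto intro!: continuous_intros)
  have intf: "f z integrable_on cbox 0 1" if "z \<in> ?U" for z
  proof (rule integrable_continuous)
    have "continuous_on (cbox 0 1) (\<lambda>t. f (fst (z, t)) (snd (z, t)))"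
      by (rule continuous_on_compose2[OF cf]) (use that in \<open>auto intro!: continuous_intros\<close>)
    then show "continuous_on (cbox 0 1) (f z)" by simp
  qed
  have z0U: "z0 \<in> ?U" using \<delta> by simp
  from leibniz_rule[of ?U 0 1 f fx, OF fder intf cfx z0U convex_ball]
  have L: "((\<lambda>z. integral (cbox 0 1) (f z)) has_derivative blinfun_apply (integral (cbox 0 1) (fx z0))) (at z0)"
    using at_within_open[OF z0U open_ball] by simp
  have cfx0: "continuous_on (cbox 0 1) (fx z0)"
  proof -
    have "continuous_on (cbox 0 1) (\<lambda>t. (\<lambda>(z, t). fx z t) (z0, t))"
      by (rule continuous_on_compose2[OF cfx]) (use z0U in \<open>auto intro!: continuous_intros\<close>)
    then show ?thesis by simp
  qed
  have ifx: "fx z0 integrable_on cbox 0 1" by (rule integrable_continuous[OF cfx0])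
  have int_h: "(\<lambda>t. DP (q z0 t) (0, h) * K t) integrable_on cbox 0 1" for h
  proof (rule integrable_continuous)
    have "continuous_on (cbox 0 1) (\<lambda>t. DP (q (fst (z0, t)) (snd (z0, t))) (0, h) * K (snd (z0, t)))"
      by (intro continuous_on_mult continuous_on_compose2[OF cDP] continuous_on_compose2[OF cK])
         (use z0U in \<open>auto intro!: continuous_intros\<close>)
    then show "continuous_on (cbox 0 1) (\<lambda>t. DP (q z0 t) (0, h) * K t)" by simp
  qed
  define D where "D = blinfun_apply (integral (cbox 0 1) (fx z0))"
  have Dh: "D h = integral (cbox 0 1) (\<lambda>t. DP (q z0 t) (0, h) * K t)" for h
    unfolding D_def blinfun_apply_integral[OF ifx] using fxa[OF z0U] by simp
  have Dlin: "D (cscale c h) = c * D h" for c h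
  proof -
    have "DP (q z0 t) (0, cscale c h) = c * DP (q z0 t) (0, h)" for t
      using lin[OF qW[OF z0U, of t], of c "(0, h)"] by (simp add: pscale_def)
    then have "(\<lambda>t. DP (q z0 t) (0, cscale c h) * K t) = (\<lambda>t. c * (DP (q z0 t) (0, h) * K t))"
      by (simp add: fun_eq_iff mult.assoc)
    moreover have "integral (cbox 0 1) (\<lambda>t. c * (DP (q z0 t) (0, h) * K t)) = c * D h"
      unfolding Dh by (rule integral_unique[OF has_integral_mult_right[OF integrable_integral[OF int_h]]])
    ultimately show ?thesis by (simp add: Dh)
  qed
  have L2: "((\<lambda>z. 1 / (2 * of_real pi * \<i>) * integral {0..1} (f z)) has_derivative
      (\<lambda>h. 1 / (2 * of_real pi * \<i>) * D h)) (at z0)"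
    by (rule has_derivative_mult_right[OF L[folded D_def, unfolded cbox_interval]])
  have "cd cscale (*) (\<lambda>z. 1 / (2 * of_real pi * \<i>) * integral {0..1} (f z)) z0"
    unfolding cd_def using L2 Dlin by (auto intro!: exI[of _ "\<lambda>h. 1 / (2 * of_real pi * \<i>) * D h"])
  then show ?thesis
    by (rule cd_cong[OF _ open_ball z0U]) (simp add: eq)
qed

lemma grp1: "(a + r) - (b + r) = a - (b::'a::group_add)"
  by (simp add: diff_add_eq_diff_diff_swap)

lemma grp2: "-((P1::'a::group_add) - P2) + (P3 - P4) = -(P5 - P2) + (-(P1 - P5) + (P3 - P6)) + (P5 - P2) + (-(P5 - P2) + (P6 - P4))"
  by (simp only: diff_conv_add_uminus minus_add minus_minus add.assoc add_minus_cancel minus_add_cancel)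

lemma grp3: "- (a::'a::group_add) + b = 0 \<Longrightarrow> b = a"
  by (metis add_minus_cancel add.right_neutral)

lemma mh_continuous_on:
  assumes "\<And>p. p \<in> S \<Longrightarrow> mh sE A F p"
  shows "continuous_on S F"
  using assms mh_isCont continuous_at_imp_continuous_on by blast

lemma theta_const:
  fixes A :: "(('g::{t2_space, group_add} \<Rightarrow> complex^'n) \<times> 'g set) set"
    and B :: "(('h::{t2_space, group_add} \<Rightarrow> complex^'m) \<times> 'h set) set"
  assumes GA: "complex_lie_group A" and GB: "complex_lie_group B"
    and hyp: "\<forall>f. holo_fun_quotient A \<Gamma> f \<longrightarrow> (\<exists>c. \<forall>g. f g = c)"
    and phi: "holo_map A B \<phi>" and eqv: "\<forall>g. \<forall>\<gamma>\<in>\<Gamma>. \<phi> (g + \<gamma>) = \<phi> g + \<rho> \<gamma>"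
    and kU: "(\<kappa>, U0) \<in> A" and cV: "(\<sigma>, V0) \<in> B" and V00: "0 \<in> V0"
    and y1: "y1 \<in> \<kappa> ` U0"
  shows "deriv (\<lambda>s. vec_nth (\<sigma> (\<phi> (inv_into U0 \<kappa> (y1 + cscale s w) + - inv_into U0 \<kappa> y1 + g) - \<phi> g)) j) 0
       = deriv (\<lambda>s. vec_nth (\<sigma> (\<phi> (inv_into U0 \<kappa> (y1 + cscale s w) + - inv_into U0 \<kappa> y1 + 0) - \<phi> 0)) j) 0"
proof -
  have AA: "complex_atlas A" using GA by (rule lie_atlas)
  have AB: "complex_atlas B" using GB by (rule lie_atlas)
  define ik where "ik = inv_into U0 \<kappa>"
  define Th where "Th g = deriv (\<lambda>s. vec_nth (\<sigma> (\<phi> (ik (y1 + cscale s w) + - ik y1 + g) - \<phi> g)) j) 0" for g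
  have hol: "cd cscale (*) (\<lambda>z. Th (inv_into U \<psi> z)) z0" if pU: "(\<psi>, U) \<in> A" and z0: "z0 \<in> \<psi> ` U" for \<psi> U z0
  proof -
    define ip where "ip = inv_into U \<psi>"
    define Q where "Q = (\<lambda>p. \<phi> (ik (fst p) + - ik y1 + ip (snd p)) - \<phi> (ip (snd p)))"
    define P where "P = (\<lambda>p. vec_nth (\<sigma> (Q p)) j)"
    define W where "W = Q -` V0 \<inter> (\<kappa> ` U0 \<times> \<psi> ` U)"
    have mhQ: "mh pscale B Q p" if p: "p \<in> \<kappa> ` U0 \<times> \<psi> ` U" for p
    proof -
      have m1: "mh pscale A (\<lambda>p. ik (fst p)) p"
        unfolding ik_def by (rule mh_precomp[OF mh_inv_chart[OF AA kU] cd_fst]) (use p in auto)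
      have m2: "mh pscale A (\<lambda>p. ik (fst p) + - ik y1) p"
        by (rule mh_add[OF GA m1 mh_const])
      have m3: "mh pscale A (\<lambda>p. ip (snd p)) p"
        unfolding ip_def by (rule mh_precomp[OF mh_inv_chart[OF AA pU] cd_snd]) (use p in auto)
      have m4: "mh pscale A (\<lambda>p. ik (fst p) + - ik y1 + ip (snd p)) p"
        by (rule mh_add[OF GA m2 m3])
      have m5: "mh pscale B (\<lambda>p. \<phi> (ik (fst p) + - ik y1 + ip (snd p))) p"
        by (rule mh_comp_holo_map[OF AA AB phi m4])
      have m6: "mh pscale B (\<lambda>p. \<phi> (ip (snd p))) p"
        by (rule mh_comp_holo_map[OF AA AB phi m3])
      show ?thesis unfolding Q_def by (rule mh_diff[OF GB m5 m6])
    qed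
    have cdP: "cd pscale (*) P p" if "p \<in> W" for p
    proof -
      have "p \<in> \<kappa> ` U0 \<times> \<psi> ` U" "Q p \<in> V0" using that by (auto simp: W_def)
      from cd_nth[OF mhD[OF mhQ[OF this(1)] cV this(2)]] show ?thesis unfolding P_def .
    qed
    have oW: "open W"
    proof -
      have o1: "open (\<kappa> ` U0 \<times> \<psi> ` U)"
        using chart_facts(2)[OF atlas_chart[OF AA kU]] chart_facts(2)[OF atlas_chart[OF AA pU]]
        by (rule open_Times)
      have "continuous_on (\<kappa> ` U0 \<times> \<psi> ` U) Q" by (rule mh_continuous_on[OF mhQ])
      then show ?thesis unfolding W_def
        using continuous_on_open_vimage[OF o1] chart_facts(1)[OF atlas_chart[OF AB cV]] by blast
    qed
    have y1U: "ik y1 \<in> U0" using y1 unfolding ik_def by (auto intro: inv_into_into)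
    have mem: "(y1, z0) \<in> W"
      using y1 z0 V00 by (simp add: W_def Q_def)
    from deriv_holo[OF oW cdP mem, of w]
    have "cd cscale (*) (\<lambda>z. deriv (\<lambda>s. P (y1 + cscale s w, z)) 0) z0" .
    moreover have "(\<lambda>z. deriv (\<lambda>s. P (y1 + cscale s w, z)) 0) = (\<lambda>z. Th (inv_into U \<psi> z))"
      by (simp add: P_def Q_def Th_def ip_def)
    ultimately show ?thesis by simp
  qed
  have cont: "continuous_on UNIV Th"
  proof (rule continuous_at_imp_continuous_on, intro ballI)
    fix g :: 'g
    obtain \<psi> U where pU: "(\<psi>, U) \<in> A" "g \<in> U" using atlas_cover[OF AA] by blast
    have cU: "is_chart \<psi> U" using atlas_chart[OF AA pU(1)] .
    have "isCont (\<lambda>z. Th (inv_into U \<psi> z)) (\<psi> g)"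
      using cd_isCont[OF hol[OF pU(1)]] pU(2) by blast
    moreover have "isCont \<psi> g"
      using chart_facts(1,4)[OF cU] pU(2) continuous_on_eq_continuous_at by blast
    ultimately have c: "isCont (\<lambda>x. Th (inv_into U \<psi> (\<psi> x))) g"
      using continuous_at_compose[of g \<psi> "\<lambda>z. Th (inv_into U \<psi> z)"] by (simp add: o_def)
    have ev: "eventually (\<lambda>x. Th (inv_into U \<psi> (\<psi> x)) = Th x) (nhds g)"
      unfolding eventually_nhds
      using chart_facts(1,3)[OF cU] pU(2) by (auto intro!: exI[of _ U] simp: inv_into_f_f)
    show "isCont Th g" by (rule isCont_cong[OF ev, THEN iffD1, OF c])
  qed
  have inv: "Th (g + \<gamma>) = Th g" if "\<gamma> \<in> \<Gamma>" for g \<gamma>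
  proof -
    have "\<phi> (X + (g + \<gamma>)) - \<phi> (g + \<gamma>) = \<phi> (X + g) - \<phi> g" for X
      using eqv that by (simp add: add.assoc[symmetric] grp1)
    then show ?thesis unfolding Th_def by simp
  qed
  have "holo_fun_quotient A \<Gamma> Th"
    unfolding holo_fun_quotient_def
    using cd_holo_fun[OF AA cont hol] inv by blast
  then obtain c where "\<forall>g. Th g = c" using hyp by blast
  then have "Th g = Th 0" by simp
  then show ?thesis by (simp add: Th_def ik_def)
qed

lemma cd_derivE:
  assumes "cd sA sB f x"
  obtains D where "(f has_derivative D) (at x)" "\<And>c v. D (sA c v) = sB c (D v)"
  using assms unfolding cd_def by blast

lemma key_zero:
  fixes A :: "(('g::{t2_space, group_add} \<Rightarrow> complex^'n) \<times> 'g set) set"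
    and B :: "(('h::{t2_space, group_add} \<Rightarrow> complex^'m) \<times> 'h set) set"
  assumes GA: "complex_lie_group A" and GB: "complex_lie_group B"
    and hyp: "\<forall>f. holo_fun_quotient A \<Gamma> f \<longrightarrow> (\<exists>c. \<forall>g. f g = c)"
    and phi: "holo_map A B \<phi>" and eqv: "\<forall>g. \<forall>\<gamma>\<in>\<Gamma>. \<phi> (g + \<gamma>) = \<phi> g + \<rho> \<gamma>"
    and kU: "(\<kappa>, U0) \<in> A" and cV: "(\<sigma>, V0) \<in> B" and V00: "0 \<in> V0"
    and k_def: "k = (\<lambda>x. - (\<phi> (x + g) - \<phi> g) + (\<phi> x - \<phi> 0))"
    and y: "y \<in> \<kappa> ` U0" and kyV: "k (inv_into U0 \<kappa> y) \<in> V0"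
    and DK: "((\<lambda>y. \<sigma> (k (inv_into U0 \<kappa> y))) has_derivative DK) (at y)"
    and DKl: "\<And>c v. DK (cscale c v) = cscale c (DK v)"
  shows "DK w = 0"
proof -
  have AA: "complex_atlas A" using GA by (rule lie_atlas)
  have AB: "complex_atlas B" using GB by (rule lie_atlas)
  have cV0: "is_chart \<sigma> V0" using atlas_chart[OF AB cV] .
  define ik where "ik = inv_into U0 \<kappa>"
  define isg where "isg = inv_into V0 \<sigma>"
  define x where "x = ik y"
  define L where "L = (\<lambda>s::complex. y + cscale s w)"
  have L0: "L 0 = y" by (simp add: L_def)
  have isV: "isg (\<sigma> v) = v" if "v \<in> V0" for v
    unfolding isg_def using that chart_facts(3)[OF cV0] by (simp add: inv_into_f_f)
  have s0V: "\<sigma> 0 \<in> \<sigma> ` V0" using V00 by simp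
  have mX: "mh (*) A (\<lambda>s. ik (L s)) 0"
  proof -
    have "mh cscale A ik (L 0)" unfolding ik_def L0 by (rule mh_inv_chart[OF AA kU y])
    from mh_precomp[OF this cd_line[of y w 0, folded L_def]] show ?thesis .
  qed
  define a where "a = (\<lambda>s. \<phi> (ik (L s) + - x + (x + g)) - \<phi> (x + g))"
  define b where "b = (\<lambda>s. \<phi> (ik (L s) + - x + x) - \<phi> x)"
  have ma: "mh (*) B a 0" unfolding a_def
    by (intro mh_diff[OF GB] mh_const mh_comp_holo_map[OF AA AB phi] mh_add[OF GA] mX)
  have mb: "mh (*) B b 0" unfolding b_def
    by (intro mh_diff[OF GB] mh_const mh_comp_holo_map[OF AA AB phi] mh_add[OF GA] mX)
  have a0: "a 0 = 0" by (simp add: a_def L0 x_def add.assoc)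
  have b0: "b 0 = 0" by (simp add: b_def L0 x_def)
  obtain Da where Da: "((\<lambda>s. \<sigma> (a s)) has_derivative Da) (at 0)" "\<And>c v. Da (c * v) = cscale c (Da v)"
    using mhD[OF ma cV] a0 V00 by (auto elim: cd_derivE)
  obtain Db where Db: "((\<lambda>s. \<sigma> (b s)) has_derivative Db) (at 0)" "\<And>c v. Db (c * v) = cscale c (Db v)"
    using mhD[OF mb cV] b0 V00 by (auto elim: cd_derivE)
  have dv: "deriv (\<lambda>s. vec_nth (\<sigma> (F s)) j) 0 = vec_nth (D 1) j"
    if "((\<lambda>s. \<sigma> (F s)) has_derivative D) (at 0)" "\<And>c v. D (c * v) = cscale c (D v)" for F D j
  proof -
    have "((\<lambda>s. vec_nth (\<sigma> (F s)) j) has_derivative (\<lambda>h. vec_nth (D h) j)) (at 0)"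
      using diff_chain_at[OF that(1) bounded_linear_imp_has_derivative[OF bounded_linear_vec_nth]]
      by (simp add: o_def)
    moreover have "(\<lambda>h. vec_nth (D h) j) = (\<lambda>h. vec_nth (D 1) j * h)"
    proof
      fix h
      have "D h = cscale h (D 1)" using that(2)[of h 1] by simp
      then show "vec_nth (D h) j = vec_nth (D 1) j * h" by (simp add: mult.commute)
    qed
    ultimately have "((\<lambda>s. vec_nth (\<sigma> (F s)) j) has_field_derivative vec_nth (D 1) j) (at 0)"
      by (simp add: has_field_derivative_def)
    then show ?thesis by (rule DERIV_imp_deriv)
  qed
  have Dab: "Da = Db"
  proof -
    have "vec_nth (Da 1) j = vec_nth (Db 1) j" for j
    proof -
      have t1: "deriv (\<lambda>s. vec_nth (\<sigma> (\<phi> (inv_into U0 \<kappa> (y + cscale s w) + - inv_into U0 \<kappa> y + (x + g)) - \<phi> (x + g))) j) 0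
          = deriv (\<lambda>s. vec_nth (\<sigma> (\<phi> (inv_into U0 \<kappa> (y + cscale s w) + - inv_into U0 \<kappa> y + 0) - \<phi> 0)) j) 0"
        by (rule theta_const[OF GA GB hyp phi eqv kU cV V00 y])
      have t2: "deriv (\<lambda>s. vec_nth (\<sigma> (\<phi> (inv_into U0 \<kappa> (y + cscale s w) + - inv_into U0 \<kappa> y + x) - \<phi> x)) j) 0
          = deriv (\<lambda>s. vec_nth (\<sigma> (\<phi> (inv_into U0 \<kappa> (y + cscale s w) + - inv_into U0 \<kappa> y + 0) - \<phi> 0)) j) 0"
        by (rule theta_const[OF GA GB hyp phi eqv kU cV V00 y])
      have "vec_nth (Da 1) j = deriv (\<lambda>s. vec_nth (\<sigma> (a s)) j) 0" using dv[OF Da] by simp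
      also have "\<dots> = deriv (\<lambda>s. vec_nth (\<sigma> (b s)) j) 0"
        using t1 t2 by (simp add: a_def b_def L_def ik_def x_def)
      also have "\<dots> = vec_nth (Db 1) j" using dv[OF Db] by simp
      finally show ?thesis .
    qed
    then have e1: "Da 1 = Db 1" by (simp add: vec_eq_iff)
    show ?thesis
    proof
      fix h
      have "Da h = cscale h (Da 1)"
        using Da(2)[of h 1] by (simp only: mult_1_right)
      also have "\<dots> = cscale h (Db 1)" by (simp only: e1)
      also have "\<dots> = Db h"
        using Db(2)[of h 1] by (simp only: mult_1_right)
      finally show "Da h = Db h" .
    qed
  qed
  define M where "M = (\<lambda>pq. \<sigma> (- isg (fst pq) + isg (snd pq)))"
  define p0 where "p0 = (\<sigma> 0, \<sigma> 0)"
  have mM: "mh pscale B (\<lambda>pq. - isg (fst pq) + isg (snd pq)) p0"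
  proof -
    have i1: "mh pscale B (\<lambda>pq. isg (fst pq)) p0"
      unfolding isg_def by (rule mh_precomp[OF _ cd_fst]) (use mh_inv_chart[OF AB cV s0V] in \<open>simp add: p0_def\<close>)
    have i2: "mh pscale B (\<lambda>pq. isg (snd pq)) p0"
      unfolding isg_def by (rule mh_precomp[OF _ cd_snd]) (use mh_inv_chart[OF AB cV s0V] in \<open>simp add: p0_def\<close>)
    show ?thesis by (rule mh_add[OF GB mh_uminus[OF GB i1] i2])
  qed
  have Mp0: "- isg (fst p0) + isg (snd p0) = 0" by (simp add: p0_def)
  obtain DM where DM: "(M has_derivative DM) (at p0)" "\<And>c v. DM (pscale c v) = cscale c (DM v)"
    using mhD[OF mM cV] Mp0 V00 unfolding M_def by (auto elim: cd_derivE)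
  have DMdiag: "DM (h, h) = 0" for h
  proof -
    have dg: "((\<lambda>p. (p, p)) has_derivative (\<lambda>h. (h, h))) (at (\<sigma> 0))"
      by (intro has_derivative_Pair has_derivative_ident)
    have "((\<lambda>p. M (p, p)) has_derivative (\<lambda>h. DM (h, h))) (at (\<sigma> 0))"
      using diff_chain_at[OF dg DM(1)[unfolded p0_def]] by (simp add: o_def)
    moreover have "((\<lambda>p. M (p, p)) has_derivative (\<lambda>h. 0)) (at (\<sigma> 0))"
    proof (rule has_derivative_transform_within_open[OF has_derivative_const[of "\<sigma> 0"] chart_facts(2)[OF cV0] s0V])
      fix p assume "p \<in> \<sigma> ` V0"
      then show "\<sigma> 0 = M (p, p)" by (simp add: M_def)
    qed
    ultimately have "(\<lambda>h. DM (h, h)) = (\<lambda>h. 0)" by (rule has_derivative_unique)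
    then show ?thesis by (simp add: fun_eq_iff)
  qed
  define u where "u = \<phi> (x + g) - \<phi> g"
  define nn where "nn = (\<lambda>p. \<sigma> (- u + isg p + u + k x))"
  have mn: "mh cscale B (\<lambda>p. - u + isg p + u + k x) (\<sigma> 0)"
    unfolding isg_def by (intro mh_add[OF GB] mh_const mh_inv_chart[OF AB cV s0V])
  have nv: "- u + isg (\<sigma> 0) + u + k x \<in> V0"
    using isV[OF V00] kyV by (simp add: x_def ik_def)
  obtain Dn where Dn: "(nn has_derivative Dn) (at (\<sigma> 0))"
    using mhD[OF mn cV nv] unfolding nn_def by (auto elim: cd_derivE)
  have Dn0: "Dn 0 = 0" using has_derivative_bounded_linear[OF Dn] linear_0 bounded_linear.linear by blast
  have dab: "((\<lambda>s. (\<sigma> (a s), \<sigma> (b s))) has_derivative (\<lambda>h. (Da h, Db h))) (at 0)"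
    by (rule has_derivative_Pair[OF Da(1) Db(1)])
  have DMp: "(M has_derivative DM) (at (\<sigma> (a 0), \<sigma> (b 0)))" using DM(1) a0 b0 by (simp add: p0_def)
  have E: "((\<lambda>s. M (\<sigma> (a s), \<sigma> (b s))) has_derivative (\<lambda>h. 0)) (at 0)"
    using diff_chain_at[OF dab DMp] by (simp add: o_def Dab DMdiag)
  have Mab: "M (\<sigma> (a 0), \<sigma> (b 0)) = \<sigma> 0" by (simp add: M_def a0 b0 isV[OF V00])
  have F: "((\<lambda>s. nn (M (\<sigma> (a s), \<sigma> (b s)))) has_derivative (\<lambda>h. 0)) (at 0)"
    using diff_chain_at[OF E Dn[folded Mab]] by (simp add: o_def Dn0)
  have oV0: "open V0" using chart_facts(1)[OF cV0] .
  obtain T1 where T1: "open T1" "0 \<in> T1" "\<And>s. s \<in> T1 \<Longrightarrow> a s \<in> V0"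
    using isCont_nbhd[OF mh_isCont[OF ma] oV0] a0 V00 by metis
  obtain T2 where T2: "open T2" "0 \<in> T2" "\<And>s. s \<in> T2 \<Longrightarrow> b s \<in> V0"
    using isCont_nbhd[OF mh_isCont[OF mb] oV0] b0 V00 by metis
  have mab: "mh (*) B (\<lambda>s. - a s + b s) 0" by (intro mh_add[OF GB] mh_uminus[OF GB] ma mb)
  obtain T3 where T3: "open T3" "0 \<in> T3" "\<And>s. s \<in> T3 \<Longrightarrow> - a s + b s \<in> V0"
    using isCont_nbhd[OF mh_isCont[OF mab] oV0] a0 b0 V00 by (metis add.right_neutral neg_0_equal_iff_equal)
  have ULo: "open (\<kappa> ` U0)" using chart_facts(2)[OF atlas_chart[OF AA kU]] .
  obtain T4 where T4: "open T4" "0 \<in> T4" "\<And>s. s \<in> T4 \<Longrightarrow> L s \<in> \<kappa> ` U0"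
    using isCont_nbhd[OF cd_isCont[OF cd_line[of y w 0, folded L_def]] ULo] L0 y by metis
  have agree: "nn (M (\<sigma> (a s), \<sigma> (b s))) = \<sigma> (k (ik (L s)))" if s: "s \<in> T1 \<inter> T2 \<inter> T3" for s
  proof -
    have "M (\<sigma> (a s), \<sigma> (b s)) = \<sigma> (- a s + b s)"
      using s T1(3) T2(3) by (simp add: M_def isV)
    then have "nn (M (\<sigma> (a s), \<sigma> (b s))) = \<sigma> (- u + (- a s + b s) + u + k x)"
      using s T3(3) by (simp add: nn_def isV)
    also have "- u + (- a s + b s) + u + k x = k (ik (L s))"
    proof -
      have e1: "ik (L s) + - x + (x + g) = ik (L s) + g" by (simp only: add.assoc minus_add_cancel)
      have e2: "ik (L s) + - x + x = ik (L s)" by (simp only: add.assoc left_minus add_0_right)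
      show ?thesis
        unfolding k_def u_def a_def b_def e1 e2
        by (rule grp2[symmetric])
    qed
    finally show ?thesis .
  qed
  have G: "((\<lambda>s. \<sigma> (k (ik (L s)))) has_derivative (\<lambda>h. 0)) (at 0)"
    by (rule has_derivative_transform_within_open[OF F, of "T1 \<inter> T2 \<inter> T3"]) (use T1 T2 T3 agree in auto)
  have "((\<lambda>s. y + cscale s w) has_derivative (\<lambda>h. cscale h w)) (at 0)"
    using cd_line[of y w 0] unfolding cd_def
    using has_derivative_add[OF has_derivative_const[of y] bounded_linear_imp_has_derivative[OF bounded_linear_cscale_left]]
    by simp
  from diff_chain_at[OF this, of "\<lambda>y. \<sigma> (k (inv_into U0 \<kappa> y))" DK] DK
  have "((\<lambda>s. \<sigma> (k (ik (L s)))) has_derivative (\<lambda>h. DK (cscale h w))) (at 0)"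
    by (simp add: o_def L_def ik_def L0[unfolded L_def])
  from has_derivative_unique[OF this G] have "\<forall>h. DK (cscale h w) = 0" by (simp add: fun_eq_iff)
  then have "DK (cscale 1 w) = 0" by blast
  then show ?thesis by (simp only: cscale_1)
qed

lemma local_const:
  fixes A :: "(('g::{t2_space, group_add} \<Rightarrow> complex^'n) \<times> 'g set) set"
    and B :: "(('h::{t2_space, group_add} \<Rightarrow> complex^'m) \<times> 'h set) set"
  assumes GA: "complex_lie_group A" and GB: "complex_lie_group B"
    and hyp: "\<forall>f. holo_fun_quotient A \<Gamma> f \<longrightarrow> (\<exists>c. \<forall>g. f g = c)"
    and phi: "holo_map A B \<phi>" and eqv: "\<forall>g. \<forall>\<gamma>\<in>\<Gamma>. \<phi> (g + \<gamma>) = \<phi> g + \<rho> \<gamma>"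
  shows "\<exists>N. open N \<and> 0 \<in> N \<and> (\<forall>x\<in>N. \<forall>g. \<phi> (x + g) - \<phi> g = \<phi> x - \<phi> 0)"
proof -
  have AA: "complex_atlas A" using GA by (rule lie_atlas)
  have AB: "complex_atlas B" using GB by (rule lie_atlas)
  obtain \<kappa> U0 where kU: "(\<kappa>, U0) \<in> A" "0 \<in> U0" using atlas_cover[OF AA] by blast
  obtain \<sigma> V0 where cV: "(\<sigma>, V0) \<in> B" "0 \<in> V0" using atlas_cover[OF AB] by blast
  have cU0: "is_chart \<kappa> U0" using atlas_chart[OF AA kU(1)] .
  have cV0: "is_chart \<sigma> V0" using atlas_chart[OF AB cV(1)] .
  define ik where "ik = inv_into U0 \<kappa>"
  define y0 where "y0 = \<kappa> 0"
  have y0U: "y0 \<in> \<kappa> ` U0" using kU by (simp add: y0_def)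
  have iky0: "ik y0 = 0" using kU chart_facts(3)[OF cU0] by (simp add: ik_def y0_def inv_into_f_f)
  have iky: "ik (\<kappa> x) = x" if "x \<in> U0" for x using that chart_facts(3)[OF cU0] by (simp add: ik_def inv_into_f_f)
  obtain \<epsilon> where \<epsilon>: "\<epsilon> > 0" "ball y0 \<epsilon> \<subseteq> \<kappa> ` U0"
    using chart_facts(2)[OF cU0] y0U openE by blast
  have main: "\<forall>y\<in>ball y0 \<epsilon>. - (\<phi> (ik y + g) - \<phi> g) + (\<phi> (ik y) - \<phi> 0) = 0" for g
  proof -
    define k where "k = (\<lambda>x. - (\<phi> (x + g) - \<phi> g) + (\<phi> x - \<phi> 0))"
    have mhk: "mh cscale B (\<lambda>y. k (ik y)) y" if y: "y \<in> \<kappa> ` U0" for y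
    proof -
      have m1: "mh cscale A ik y" unfolding ik_def by (rule mh_inv_chart[OF AA kU(1) y])
      show ?thesis unfolding k_def
        by (intro mh_add[OF GB] mh_uminus[OF GB] mh_diff[OF GB] mh_const
            mh_comp_holo_map[OF AA AB phi] mh_add[OF GA] m1)
    qed
    have kc: "continuous_on (\<kappa> ` U0) (\<lambda>y. k (ik y))" by (rule mh_continuous_on[OF mhk])
    define Om where "Om = (\<lambda>y. k (ik y)) -` V0 \<inter> \<kappa> ` U0"
    have oOm: "open Om" unfolding Om_def
      using kc chart_facts(2)[OF cU0] chart_facts(1)[OF cV0] continuous_on_open_vimage by blast
    have zero: "((\<lambda>y. \<sigma> (k (ik y))) has_derivative (\<lambda>_. 0)) (at y)" if y: "y \<in> Om" for y
    proof -
      have yU: "y \<in> \<kappa> ` U0" and kyV: "k (ik y) \<in> V0" using y by (auto simp: Om_def)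
      obtain DK where DK: "((\<lambda>y. \<sigma> (k (ik y))) has_derivative DK) (at y)" "\<And>c v. DK (cscale c v) = cscale c (DK v)"
        using mhD[OF mhk[OF yU] cV(1) kyV] by (auto elim: cd_derivE)
      have "DK w = 0" for w
        by (rule key_zero[OF GA GB hyp phi eqv kU(1) cV k_def yU kyV[unfolded ik_def] DK(1)[unfolded ik_def] DK(2)])
      then have "DK = (\<lambda>_. 0)" by (simp add: fun_eq_iff)
      then show ?thesis using DK(1) by simp
    qed
    define T where "T = {y \<in> ball y0 \<epsilon>. k (ik y) = 0}"
    have y0T: "y0 \<in> T" using \<epsilon> by (simp add: T_def k_def iky0)
    have oT: "open T"
      unfolding open_contains_ball
    proof
      fix y1 assume y1: "y1 \<in> T"
      then have "y1 \<in> Om \<inter> ball y0 \<epsilon>" using \<epsilon> cV by (auto simp: T_def Om_def)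
      moreover have "open (Om \<inter> ball y0 \<epsilon>)" using oOm by auto
      ultimately obtain e' where e': "e' > 0" "ball y1 e' \<subseteq> Om \<inter> ball y0 \<epsilon>" using openE by metis
      have "\<exists>c. \<forall>y\<in>ball y1 e'. \<sigma> (k (ik y)) = c"
      proof (rule has_derivative_zero_constant[OF convex_ball])
        fix y assume "y \<in> ball y1 e'"
        then have "y \<in> Om" using e' by blast
        from has_derivative_at_withinI[OF zero[OF this]]
        show "((\<lambda>x. \<sigma> (k (ik x))) has_derivative (\<lambda>h. 0)) (at y within ball y1 e')" .
      qed
      then obtain c where c: "\<And>y. y \<in> ball y1 e' \<Longrightarrow> \<sigma> (k (ik y)) = c" by blast
      have "c = \<sigma> 0" using c[of y1] e' y1 by (simp add: T_def)
      have "ball y1 e' \<subseteq> T"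
      proof
        fix y assume yb: "y \<in> ball y1 e'"
        then have "k (ik y) \<in> V0" "y \<in> ball y0 \<epsilon>" using e' by (auto simp: Om_def)
        moreover have "\<sigma> (k (ik y)) = \<sigma> 0" using c[OF yb] \<open>c = \<sigma> 0\<close> by simp
        ultimately show "y \<in> T"
          using chart_facts(3)[OF cV0] cV(2) by (auto simp: T_def dest: inj_onD)
      qed
      then show "\<exists>e>0. ball y1 e \<subseteq> T" using e' by blast
    qed
    have cT: "closedin (top_of_set (ball y0 \<epsilon>)) T"
    proof -
      have "closedin (top_of_set (ball y0 \<epsilon>)) (ball y0 \<epsilon> \<inter> (\<lambda>y. k (ik y)) -` {0})"
        by (rule continuous_closedin_preimage[OF continuous_on_subset[OF kc \<epsilon>(2)] closed_singleton])
      moreover have "ball y0 \<epsilon> \<inter> (\<lambda>y. k (ik y)) -` {0} = T" by (auto simp: T_def)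
      ultimately show ?thesis by simp
    qed
    have "openin (top_of_set (ball y0 \<epsilon>)) T" by (rule open_subset) (use oT in \<open>auto simp: T_def\<close>)
    then have "T = {} \<or> T = ball y0 \<epsilon>" using cT connected_clopen[of "ball y0 \<epsilon>"] by auto
    then have "T = ball y0 \<epsilon>" using y0T by auto
    then show ?thesis by (auto simp: T_def k_def)
  qed
  define N where "N = \<kappa> -` ball y0 \<epsilon> \<inter> U0"
  have oN: "open N"
    unfolding N_def using chart_facts(1,4)[OF cU0] continuous_on_open_vimage by blast
  have "0 \<in> N" using \<epsilon> kU by (simp add: N_def y0_def)
  moreover have "\<phi> (x + g) - \<phi> g = \<phi> x - \<phi> 0" if "x \<in> N" for x g
  proof -
    have "\<kappa> x \<in> ball y0 \<epsilon>" "x \<in> U0" using that by (auto simp: N_def)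
    from main[of g, rule_format, OF this(1)] iky[OF this(2)]
    have "- (\<phi> (x + g) - \<phi> g) + (\<phi> x - \<phi> 0) = 0" by simp
    then show ?thesis by (rule grp3[THEN sym])
  qed
  ultimately show ?thesis using oN by blast
qed

theorem proposition1:
  fixes A :: "(('g::{t2_space, group_add} \<Rightarrow> complex^'n) \<times> 'g set) set"
    and B :: "(('h::{t2_space, group_add} \<Rightarrow> complex^'m) \<times> 'h set) set"
    and \<Gamma> :: "'g set"
    and \<rho> :: "'g \<Rightarrow> 'h"
  assumes "complex_lie_group A"
    and "connected (UNIV :: 'g set)"
    and "complex_lie_group B"
    and "discrete_subgroup \<Gamma>"
    and "group_hom_on \<Gamma> \<rho>"
    and "\<forall>f. holo_fun_quotient A \<Gamma> f \<longrightarrow> (\<exists>c. \<forall>g. f g = c)"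
  shows "induced_bundle_holo_trivial A B \<Gamma> \<rho> \<longleftrightarrow>
         (\<exists>\<rho>'. holo_map A B \<rho>' \<and> (\<forall>x y. \<rho>' (x + y) = \<rho>' x + \<rho>' y) \<and>
               (\<forall>\<gamma>\<in>\<Gamma>. \<rho>' \<gamma> = \<rho> \<gamma>))"
proof
  have GA: "complex_lie_group A" and conn: "connected (UNIV :: 'g set)" and GB: "complex_lie_group B"
    and hyp: "\<forall>f. holo_fun_quotient A \<Gamma> f \<longrightarrow> (\<exists>c. \<forall>g. f g = c)" using assms by auto
  have AA: "complex_atlas A" using GA by (rule lie_atlas)
  have AB: "complex_atlas B" using GB by (rule lie_atlas)
  assume "induced_bundle_holo_trivial A B \<Gamma> \<rho>"
  then obtain \<phi> where phi: "holo_map A B \<phi>" and eqv: "\<forall>g. \<forall>\<gamma>\<in>\<Gamma>. \<phi> (g + \<gamma>) = \<phi> g + \<rho> \<gamma>"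
    unfolding induced_bundle_holo_trivial_def by blast
  obtain N where N: "open N" "0 \<in> N" "\<And>x g. x \<in> N \<Longrightarrow> \<phi> (x + g) - \<phi> g = \<phi> x - \<phi> 0"
    using local_const[OF GA GB hyp phi eqv] by blast
  define S where "S = {x. \<forall>g. \<phi> (x + g) = (\<phi> x - \<phi> 0) + \<phi> g}"
  have NS: "x \<in> S" if "x \<in> N" for x
    using N(3)[OF that] unfolding S_def by (simp add: diff_eq_eq)
  have Sadd: "a + b \<in> S" if a: "a \<in> S" and b: "b \<in> S" for a b
  proof -
    have ha: "\<phi> (a + G) = (\<phi> a - \<phi> 0) + \<phi> G" for G using a by (simp add: S_def)
    have hb: "\<phi> (b + G) = (\<phi> b - \<phi> 0) + \<phi> G" for G using b by (simp add: S_def)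
    have "\<phi> (a + b + g) = (\<phi> (a + b) - \<phi> 0) + \<phi> g" for g
    proof -
      have "\<phi> (a + b + g) = (\<phi> a - \<phi> 0) + ((\<phi> b - \<phi> 0) + \<phi> g)"
        by (simp only: add.assoc ha hb)
      moreover have "\<phi> (a + b) - \<phi> 0 = (\<phi> a - \<phi> 0) + (\<phi> b - \<phi> 0)"
        by (simp only: ha add_diff_eq)
      ultimately show ?thesis by (simp only: add.assoc)
    qed
    then show ?thesis by (simp add: S_def)
  qed
  have addc: "isCont (\<lambda>y. a + f y) x" if "isCont f x" for a :: 'g and f :: "'g \<Rightarrow> 'g" and x
    using continuous_at_compose[OF continuous_Pair[OF continuous_const that] lie_add_isCont[OF GA]]
    by (simp add: o_def)
  have addcH: "isCont (\<lambda>y. a + f y) x" if "isCont f x" for a :: 'h and f :: "'g \<Rightarrow> 'h" and x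
    using continuous_at_compose[OF continuous_Pair[OF continuous_const that] lie_add_isCont[OF GB]]
    by (simp add: o_def)
  have uc: "isCont (uminus :: 'g \<Rightarrow> 'g) x" for x by (rule holo_map_isCont[OF lie_uminus[OF GA]])
  have oS: "open S"
  proof (rule open_subopen[THEN iffD2], rule ballI)
    fix s assume s: "s \<in> S"
    have cs: "isCont (\<lambda>y. - s + y) x" for x by (rule addc[OF continuous_ident])
    have "open ((\<lambda>y. - s + y) -` N)" using continuous_open_vimage[OF N(1) cs] .
    moreover have "s \<in> (\<lambda>y. - s + y) -` N" using N(2) by simp
    moreover have "(\<lambda>y. - s + y) -` N \<subseteq> S"
    proof
      fix y assume "y \<in> (\<lambda>y. - s + y) -` N"
      then have "- s + y \<in> N" by simp
      then have "s + (- s + y) \<in> S" by (rule Sadd[OF s NS])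
      then show "y \<in> S" by (simp only: add_minus_cancel)
    qed
    ultimately show "\<exists>T. open T \<and> s \<in> T \<and> T \<subseteq> S" by blast
  qed
  have oC: "open (- S)"
  proof (rule open_subopen[THEN iffD2], rule ballI)
    fix y assume y: "y \<in> - S"
    have c: "isCont (\<lambda>y'. - y' + y) x" for x
    proof -
      have "isCont (\<lambda>y'. (- y', y)) x" by (intro continuous_Pair uc continuous_const)
      from continuous_at_compose[OF this lie_add_isCont[OF GA]] show ?thesis by (simp add: o_def)
    qed
    have "open ((\<lambda>y'. - y' + y) -` N)" by (rule continuous_open_vimage[OF N(1) c])
    moreover have "y \<in> (\<lambda>y'. - y' + y) -` N" using N(2) by simp
    moreover have "(\<lambda>y'. - y' + y) -` N \<subseteq> - S"
    proof
      fix y' assume y': "y' \<in> (\<lambda>y'. - y' + y) -` N"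
      show "y' \<in> - S"
      proof
        assume "y' \<in> S"
        moreover have "- y' + y \<in> N" using y' by simp
        ultimately have "y' + (- y' + y) \<in> S" by (rule Sadd[OF _ NS])
        then have "y \<in> S" by (simp only: add_minus_cancel)
        then show False using y by simp
      qed
    qed
    ultimately show "\<exists>T. open T \<and> y \<in> T \<and> T \<subseteq> - S" by blast
  qed
  have "0 \<in> S" using NS N(2) by blast
  then have SU: "S = UNIV"
    using conn oS oC unfolding connected_def by blast
  define \<rho>' where "\<rho>' = (\<lambda>x. - \<phi> 0 + \<phi> x)"
  have hm: "holo_map A B \<rho>'"
  proof (rule mh_holo_map[OF AA AB])
    show "continuous_on UNIV \<rho>'"
      unfolding \<rho>'_def
      by (intro continuous_at_imp_continuous_on ballI addcH holo_map_isCont[OF phi])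
    fix \<kappa> U z assume "(\<kappa>, U) \<in> A" "z \<in> \<kappa> ` U"
    show "mh cscale B (\<lambda>w. \<rho>' (inv_into U \<kappa> w)) z"
      unfolding \<rho>'_def by (rule mh_add[OF GB mh_const holo_map_mh[OF AA AB phi \<open>(\<kappa>, U) \<in> A\<close> \<open>z \<in> \<kappa> ` U\<close>]])
  qed
  have hom: "\<rho>' (x + y) = \<rho>' x + \<rho>' y" for x y
  proof -
    have "x \<in> S" using SU by simp
    then have "\<phi> (x + y) = (\<phi> x - \<phi> 0) + \<phi> y" by (simp add: S_def)
    then show ?thesis unfolding \<rho>'_def by (simp only: diff_conv_add_uminus add.assoc)
  qed
  have ext: "\<rho>' \<gamma> = \<rho> \<gamma>" if "\<gamma> \<in> \<Gamma>" for \<gamma>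
    using eqv that unfolding \<rho>'_def by (metis add.left_neutral minus_add_cancel)
  show "\<exists>\<rho>'. holo_map A B \<rho>' \<and> (\<forall>x y. \<rho>' (x + y) = \<rho>' x + \<rho>' y) \<and> (\<forall>\<gamma>\<in>\<Gamma>. \<rho>' \<gamma> = \<rho> \<gamma>)"
    using hm hom ext by blast
next
  assume "\<exists>\<rho>'. holo_map A B \<rho>' \<and> (\<forall>x y. \<rho>' (x + y) = \<rho>' x + \<rho>' y) \<and> (\<forall>\<gamma>\<in>\<Gamma>. \<rho>' \<gamma> = \<rho> \<gamma>)"
  then obtain \<rho>' where "holo_map A B \<rho>'" "\<forall>x y. \<rho>' (x + y) = \<rho>' x + \<rho>' y" "\<forall>\<gamma>\<in>\<Gamma>. \<rho>' \<gamma> = \<rho> \<gamma>"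
    by blast
  then show "induced_bundle_holo_trivial A B \<Gamma> \<rho>"
    unfolding induced_bundle_holo_trivial_def by (intro exI[of _ \<rho>']) auto
qed

end
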